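(* Let $t_1,\dots,t_N\in\mathbb{C}$ be pairwise distinct, let $B_1,\dots,B_N$ be constant complex $M\times M$ matrices, and let $y$ be a $\mathbb{C}^M$-valued function satisfying $D_xy=\sum_{i=1}^N\frac{B_i}{x-t_i}\,y$. Put $Y_0={}^{\mathrm T}\!\left[\frac{y}{x-t_1},\dots,\frac{y}{x-t_N}\right]\in\mathbb{C}^{MN}$. Then $Y_0$ satisfies the $q$-Okubo type system $$\Big(xI-\tfrac{1}{q}S\Big)D_xY_0=\tfrac1q(B-I)Y_0,$$ where $S=\mathrm{diag}(t_1I_M,\dots,t_NI_M)$ (block diagonal, $MN\times MN$) and $B$ is the $MN\times MN$ block matrix all of whose $N$ block rows equal $[B_1\ B_2\ \cdots\ B_N]$.
   Context: Fix $q\in\mathbb{C}$ with $0<|q|<1$. $D_xf(x)=\frac{f(x)-f(qx)}{(1-q)x}$, applied componentwise to vector-valued functions. $I$ denotes the identity matrix of the appropriate size. *)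

theory Defs
  imports "HOL-Analysis.Analysis"
begin

definition qD :: "complex \<Rightarrow> (complex \<Rightarrow> complex ^ 'k) \<Rightarrow> complex \<Rightarrow> complex ^ 'k" where
  "qD q f x = (\<chi> j. (f x $ j - f (q * x) $ j) / ((1 - q) * x))"

text \<open>C^{MN} is indexed by pairs (i,k): block i (1..N), component k (1..M).\<close>
definition Y0 :: "('n::finite \<Rightarrow> complex) \<Rightarrow> (complex \<Rightarrow> complex ^ 'm::finite) \<Rightarrow> complex \<Rightarrow> complex ^ ('n \<times> 'm)" where
  "Y0 t y x = (\<chi> p. y x $ snd p / (x - t (fst p)))"

definition Smat :: "('n::finite \<Rightarrow> complex) \<Rightarrow> complex ^ ('n \<times> 'm::finite) ^ ('n \<times> 'm)" where
  "Smat t = (\<chi> r c. if r = c then t (fst r) else 0)"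

text \<open>B: every block row equals [B_1 ... B_N], i.e. block (i,j) is B_j.\<close>
definition Bmat :: "('n::finite \<Rightarrow> complex ^ 'm::finite ^ 'm) \<Rightarrow> complex ^ ('n \<times> 'm) ^ ('n \<times> 'm)" where
  "Bmat B = (\<chi> r c. B (fst c) $ snd r $ snd c)"

end

theory Submission
  imports Defs
begin

lemma keyl0: fixes a b w d q :: complex
  assumes "w + d \<noteq> 0" "w \<noteq> 0" "d \<noteq> 0" "q \<noteq> 0"
  shows "(w/q) * ((a/(w+d) - b/w)/d) = 1/q*((a-b)/d - a/(w+d))"
proof -
  have "a/(w+d) - b/w = (a*w - b*(w+d))/((w+d)*w)" using assms by (simp add: divide_simps)
  moreover have "(a-b)/d - a/(w+d) = ((a-b)*(w+d) - a*d)/(d*(w+d))" using assms by (simp add: divide_simps)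
  moreover have "(a-b)*(w+d) - a*d = a*w - b*(w+d)" by (simp add: algebra_simps)
  ultimately show ?thesis using assms by (simp add: divide_simps)
qed
lemma keyl: fixes a b u w d q :: complex
  assumes "u \<noteq> 0" "w \<noteq> 0" "d \<noteq> 0" "q \<noteq> 0" "u = w + d"
  shows "(w/q) * ((a/u - b/w)/d) = 1/q*((a-b)/d - a/u)"
  using keyl0[of w d q a b] assms by simp

lemma ifm: "(if P then a else 0) * (c::complex) = (if P then a * c else 0)"
  by simp

lemma mat_mult_comp: "(mat a ** A) $ r $ c = (a::complex) * A $ r $ c"
  by (simp add: matrix_matrix_mult_def mat_def ifm sum.delta sum.delta')

lemma diag_part:
  fixes v :: "complex ^ ('n::finite \<times> 'm::finite)"
  shows "((mat x - mat (1 / q) ** Smat t) *v v) $ p = (x - t (fst p) / q) * v $ p"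
proof -
  have h: "(mat x - mat (1/q) ** Smat t) $ r $ c = (if r=c then x - t(fst r)/q else 0)" for r c
    by (simp only: vector_minus_component mat_mult_comp) (simp add: mat_def Smat_def)
  show ?thesis by (simp only: matrix_vector_mult_def vec_lambda_beta h) (simp add: ifm sum.delta sum.delta')
qed

lemma B_part:
  fixes Y :: "complex ^ ('n::finite \<times> 'm::finite)"
  shows "((Bmat B - mat 1) *v Y) $ p =
     (\<Sum>i\<in>UNIV. \<Sum>j\<in>UNIV. B i $ snd p $ j * Y $ (i, j)) - Y $ p"
proof -
  have "((Bmat B - mat 1) *v Y) $ p = (\<Sum>c\<in>UNIV. B (fst c) $ snd p $ snd c * Y $ c) - Y $ p"
  proof -
    have "((Bmat B - mat 1) *v Y) $ p = (\<Sum>c\<in>UNIV. (Bmat B $ p $ c - mat 1 $ p $ c) * Y $ c)"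
      by (simp only: matrix_vector_mult_def vec_lambda_beta vector_minus_component)
    also have "\<dots> = (\<Sum>c\<in>UNIV. Bmat B $ p $ c * Y $ c) - (\<Sum>c\<in>UNIV. mat 1 $ p $ c * Y $ c)"
      by (simp only: left_diff_distrib sum_subtractf)
    also have "(\<Sum>c\<in>UNIV. mat 1 $ p $ c * Y $ c) = Y $ p"
      unfolding mat_def vec_lambda_beta by (simp only: ifm mult_1 mult_zero_left sum.delta'[OF finite_class.finite_UNIV] UNIV_I if_True)
    finally show ?thesis by (simp only: Bmat_def vec_lambda_beta)
  qed
  also have "(\<Sum>c\<in>UNIV. B (fst c) $ snd p $ snd c * Y $ c)
      = (\<Sum>i\<in>UNIV. \<Sum>j\<in>UNIV. B i $ snd p $ j * Y $ (i, j))"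
    by (simp only: sum.cartesian_product UNIV_Times_UNIV split_def prod.collapse)
  finally show ?thesis .
qed

theorem mainTheorem2:
  fixes q :: complex
    and t :: "'n::finite \<Rightarrow> complex"
    and B :: "'n \<Rightarrow> complex ^ 'm::finite ^ 'm"
    and y :: "complex \<Rightarrow> complex ^ 'm"
  assumes q: "0 < cmod q" "cmod q < 1"
    and distinct: "inj t"
    and eq: "\<And>x. x \<noteq> 0 \<Longrightarrow> (\<forall>i. x \<noteq> t i \<and> q * x \<noteq> t i) \<Longrightarrow>
               qD q y x = (\<Sum>i\<in>UNIV. (1 / (x - t i)) *s (B i *v y x))"
  shows "\<And>x. x \<noteq> 0 \<Longrightarrow> (\<forall>i. x \<noteq> t i \<and> q * x \<noteq> t i) \<Longrightarrow>
           (mat x - mat (1 / q) ** Smat t) *v qD q (Y0 t y) x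
             = (1 / q) *s ((Bmat B - mat 1) *v Y0 t y x)"
proof -
  fix x assume x0: "x \<noteq> 0" and xt: "\<forall>i. x \<noteq> t i \<and> q * x \<noteq> t i"
  have q0: "q \<noteq> 0" using q by auto
  have q1: "q \<noteq> 1" using q by auto
  show "(mat x - mat (1 / q) ** Smat t) *v qD q (Y0 t y) x
             = (1 / q) *s ((Bmat B - mat 1) *v Y0 t y x)"
    unfolding vec_eq_iff
  proof (intro allI)
    fix p :: "'n \<times> 'm"
    obtain i k where p: "p = (i, k)" by (cases p)
    have e: "qD q y x $ k = (\<Sum>i\<in>UNIV. \<Sum>j\<in>UNIV. B i $ k $ j * (y x $ j / (x - t i)))"
      using eq[OF x0 xt]
      by (simp add: matrix_vector_mult_def sum_distrib_left mult_ac)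
    have e2: "qD q y x $ k = (y x $ k - y (q*x) $ k) / ((1 - q) * x)"
      by (simp add: qD_def)
    have u: "x - t i \<noteq> 0" "q * x - t i \<noteq> 0" using xt by auto
    have d: "(1 - q) * x \<noteq> 0" using q1 x0 by auto
    have key: "(x - t i / q) * ((y x $ k / (x - t i) - y (q * x) $ k / (q * x - t i)) / ((1 - q) * x))
       = 1 / q * ((y x $ k - y (q*x) $ k) / ((1 - q) * x) - y x $ k / (x - t i))"
    proof -
      have h1: "x - t i / q = (q*x - t i)/q" using q0 by (simp add: field_simps)
      have h2: "x - t i = (q*x - t i) + (1-q)*x" by (simp add: algebra_simps)
      show ?thesis unfolding h1 by (rule keyl[OF u(1) u(2) d q0 h2])
    qed
    show "((mat x - mat (1 / q) ** Smat t) *v qD q (Y0 t y) x) $ p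
        = ((1 / q) *s ((Bmat B - mat 1) *v Y0 t y x)) $ p"
    proof -
      have L: "((mat x - mat (1 / q) ** Smat t) *v qD q (Y0 t y) x) $ p
          = (x - t i / q) * ((y x $ k / (x - t i) - y (q * x) $ k / (q * x - t i)) / ((1 - q) * x))"
        by (simp only: diag_part) (simp add: p qD_def Y0_def)
      have R: "((1 / q) *s ((Bmat B - mat 1) *v Y0 t y x)) $ p
          = 1 / q * ((\<Sum>i\<in>UNIV. \<Sum>j\<in>UNIV. B i $ k $ j * (y x $ j / (x - t i))) - y x $ k / (x - t i))"
        by (simp only: vector_smult_component B_part) (simp add: p Y0_def)
      show ?thesis unfolding L R key e2[symmetric] e ..
    qed
  qed
qed

end
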